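(* Fix $\lambda_1,\lambda_2,\lambda_3\in\mathbb{Z}_{\ge0}$ and an infinite reduced sequence $\mathbf{w}$, with ratio number sequence $\{k_j\}_{j\ge1}$. Then the sequence $\{\log k_j\}_{j\ge1}$ converges to a real number.
   Context: Generalized Markov mutations: $\mu_1(x_1,x_2,x_3)=(\frac{x_2^2+\lambda_1x_2x_3+x_3^2}{x_1},x_2,x_3)$, $\mu_2(x_1,x_2,x_3)=(x_1,\frac{x_1^2+\lambda_2x_1x_3+x_3^2}{x_2},x_3)$, $\mu_3(x_1,x_2,x_3)=(x_1,x_2,\frac{x_1^2+\lambda_3x_1x_2+x_2^2}{x_3})$. A sequence with entries in $\{1,2,3\}$ is reduced if consecutive entries differ. Ratio number sequence: $T_0=(1,1,1)$, $T_j=\mu_{w_j}(T_{j-1})$, and $k_j$ is the $w_j$-th component of $T_j$ divided by the product of the other two components of $T_j$. $\log$ is the natural logarithm. *)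

theory Defs
  imports Complex_Main
begin

fun gmut :: "real \<Rightarrow> real \<Rightarrow> real \<Rightarrow> nat \<Rightarrow> real \<times> real \<times> real \<Rightarrow> real \<times> real \<times> real" where
  "gmut l1 l2 l3 i (x1, x2, x3) =
     (if i = 1 then ((x2^2 + l1 * x2 * x3 + x3^2) / x1, x2, x3)
      else if i = 2 then (x1, (x1^2 + l2 * x1 * x3 + x3^2) / x2, x3)
      else if i = 3 then (x1, x2, (x1^2 + l3 * x1 * x2 + x2^2) / x3)
      else (x1, x2, x3))"

text \<open>Sequences w = (w_1, w_2, ...) are functions nat \<Rightarrow> nat; the value at 0 is ignored.\<close>

definition reduced_seq :: "(nat \<Rightarrow> nat) \<Rightarrow> bool" where
  "reduced_seq w \<longleftrightarrow> (\<forall>j\<ge>1. w j \<in> {1,2,3}) \<and> (\<forall>j\<ge>1. w j \<noteq> w (Suc j))"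

fun Tseq :: "real \<Rightarrow> real \<Rightarrow> real \<Rightarrow> (nat \<Rightarrow> nat) \<Rightarrow> nat \<Rightarrow> real \<times> real \<times> real" where
  "Tseq l1 l2 l3 w 0 = (1, 1, 1)"
| "Tseq l1 l2 l3 w (Suc j) = gmut l1 l2 l3 (w (Suc j)) (Tseq l1 l2 l3 w j)"

fun comp_ratio :: "nat \<Rightarrow> real \<times> real \<times> real \<Rightarrow> real" where
  "comp_ratio i (x1, x2, x3) =
     (if i = 1 then x1 / (x2 * x3) else if i = 2 then x2 / (x1 * x3) else x3 / (x1 * x2))"

definition ratio_num :: "real \<Rightarrow> real \<Rightarrow> real \<Rightarrow> (nat \<Rightarrow> nat) \<Rightarrow> nat \<Rightarrow> real" where
  "ratio_num l1 l2 l3 w j = comp_ratio (w j) (Tseq l1 l2 l3 w j)"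

end

theory Submission
  imports Defs
begin

lemma mut_step:
  fixes a b c p q r K a' :: real
  assumes "a>0" "b>0" "c>0" "p\<ge>0"
    and e: "a^2+b^2+c^2+p*b*c+q*a*c+r*a*b = K*a*b*c"
    and a': "a' = (b^2+p*b*c+c^2)/a"
  shows "a' > 0 \<and> a'^2+b^2+c^2+p*b*c+q*a'*c+r*a'*b = K*a'*b*c"
proof
  show "a' > 0" unfolding a' using assms by (intro divide_pos_pos add_pos_pos add_nonneg_pos) auto
  define Q where "Q = b^2+p*b*c+c^2"
  have e2: "a^2 + (q*c+r*b)*a + Q = K*a*b*c" using e unfolding Q_def by (simp add: algebra_simps)
  have aa: "a' * a = Q" unfolding a' Q_def using \<open>a>0\<close> by simp
  have "a^2 * (a'^2 + (q*c+r*b)*a' + Q - K*a'*b*c) = (a'*a)^2 + (q*c+r*b)*(a'*a)*a + Q*a^2 - K*(a'*a)*a*b*c"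
    by (simp add: algebra_simps power2_eq_square)
  also have "\<dots> = Q*(Q + (q*c+r*b)*a + a^2 - K*a*b*c)"
    unfolding aa by (simp add: algebra_simps power2_eq_square)
  also have "\<dots> = 0" using e2 by (simp add: algebra_simps)
  finally have "a'^2 + (q*c+r*b)*a' + Q - K*a'*b*c = 0" using \<open>a>0\<close> by simp
  then show "a'^2+b^2+c^2+p*b*c+q*a'*c+r*a'*b = K*a'*b*c" unfolding Q_def by (simp add: algebra_simps)
qed

definition Inv :: "real \<Rightarrow> real \<Rightarrow> real \<Rightarrow> real \<times> real \<times> real \<Rightarrow> bool" where
  "Inv l1 l2 l3 t = (case t of (a,b,c) \<Rightarrow> a>0 \<and> b>0 \<and> c>0 \<and>
     a^2+b^2+c^2+l1*b*c+l2*a*c+l3*a*b = (3+l1+l2+l3)*a*b*c)"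

lemma inv_step:
  assumes "l1\<ge>0" "l2\<ge>0" "l3\<ge>0" "Inv l1 l2 l3 t" "i \<in> {1,2,3}"
  shows "Inv l1 l2 l3 (gmut l1 l2 l3 i t)"
proof -
  obtain a b c where t: "t = (a,b,c)" by (cases t) auto
  define K where "K = 3+l1+l2+l3"
  have h: "a>0" "b>0" "c>0" "a^2+b^2+c^2+l1*b*c+l2*a*c+l3*a*b = K*a*b*c"
    using assms(4) unfolding Inv_def t K_def by auto
  consider "i=1" | "i=2" | "i=3" using assms(5) by auto
  then show ?thesis
  proof cases
    case 1
    define x where "x = (b^2+l1*b*c+c^2)/a"
    have g: "gmut l1 l2 l3 i t = (x,b,c)" using 1 unfolding t x_def by simp
    have pre: "a^2+b^2+c^2+l1*b*c+l2*a*c+l3*a*b = K*a*b*c" using h by (simp add: algebra_simps)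
    note m = mut_step[OF h(1,2,3) assms(1) pre x_def]
    show ?thesis unfolding g Inv_def K_def using m h unfolding K_def by (simp add: algebra_simps)
  next
    case 2
    define x where "x = (a^2+l2*a*c+c^2)/b"
    have g: "gmut l1 l2 l3 i t = (a,x,c)" using 2 unfolding t x_def by simp
    have pre: "b^2+a^2+c^2+l2*a*c+l1*b*c+l3*b*a = K*b*a*c" using h by (simp add: algebra_simps)
    note m = mut_step[OF h(2,1,3) assms(2) pre x_def]
    show ?thesis unfolding g Inv_def K_def using m h unfolding K_def by (simp add: algebra_simps)
  next
    case 3
    define x where "x = (a^2+l3*a*b+b^2)/c"
    have g: "gmut l1 l2 l3 i t = (a,b,x)" using 3 unfolding t x_def by simp
    have pre: "c^2+a^2+b^2+l3*a*b+l1*c*b+l2*c*a = K*c*a*b" using h by (simp add: algebra_simps)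
    note m = mut_step[OF h(3,1,2) assms(3) pre x_def]
    show ?thesis unfolding g Inv_def K_def using m h unfolding K_def by (simp add: algebra_simps)
  qed
qed

lemma inv_all:
  assumes "l1\<ge>0" "l2\<ge>0" "l3\<ge>0" "reduced_seq w"
  shows "Inv l1 l2 l3 (Tseq l1 l2 l3 w j)"
proof (induction j)
  case 0 then show ?case by (simp add: Inv_def)
next
  case (Suc j)
  have "w (Suc j) \<in> {1,2,3}" using assms(4) unfolding reduced_seq_def by auto
  then show ?case using inv_step[OF assms(1,2,3) Suc] by simp
qed

lemma ratio_bound:
  assumes "l1\<ge>0" "l2\<ge>0" "l3\<ge>0" "Inv l1 l2 l3 t"
  shows "0 < comp_ratio i t \<and> comp_ratio i t \<le> 3+l1+l2+l3"
proof -
  obtain a b c where t: "t = (a,b,c)" by (cases t) auto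
  define K where "K = 3+l1+l2+l3"
  have h: "a>0" "b>0" "c>0" "a^2+b^2+c^2+l1*b*c+l2*a*c+l3*a*b = K*a*b*c"
    using assms(4) unfolding Inv_def t K_def by auto
  have nn: "0 \<le> l1*b*c" "0 \<le> l2*a*c" "0 \<le> l3*a*b" using h assms(1,2,3) by auto
  have sq: "0 \<le> a^2" "0 \<le> b^2" "0 \<le> c^2" by auto
  have A: "a^2 \<le> K*a*b*c" "b^2 \<le> K*a*b*c" "c^2 \<le> K*a*b*c" using h(4) nn sq by linarith+
  have "a \<le> K*b*c" using A(1) h(1) by (simp add: power2_eq_square mult.assoc)
  hence 1: "a/(b*c) \<le> K" using h by (simp add: divide_simps mult.assoc)
  have "b*b \<le> b*(K*a*c)" using A(2) by (simp add: power2_eq_square mult_ac)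
  hence "b \<le> K*a*c" using h(2) by simp
  hence 2: "b/(a*c) \<le> K" using h by (simp add: divide_simps mult.assoc)
  have "c*c \<le> c*(K*a*b)" using A(3) by (simp add: power2_eq_square mult_ac)
  hence "c \<le> K*a*b" using h(3) by simp
  hence 3: "c/(a*b) \<le> K" using h by (simp add: divide_simps mult.assoc)
  show ?thesis using 1 2 3 h(1,2,3) unfolding t K_def by auto
qed

lemma core:
  fixes x y z Q :: real
  assumes "x>0" "y>0" "z>0" "x^2 \<le> Q"
  shows "x/(y*z) \<le> Q/y/(x*z)"
proof -
  have "x/(y*z) = x^2/y/(x*z)" using assms by (simp add: field_simps power2_eq_square)
  also have "\<dots> \<le> Q/y/(x*z)" using assms by (intro divide_right_mono) auto
  finally show ?thesis .
qed

lemma ratio_mono: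
  assumes "l1\<ge>0" "l2\<ge>0" "l3\<ge>0" "Inv l1 l2 l3 t" "i \<in> {1,2,3}" "m \<in> {1,2,3}" "i \<noteq> m"
  shows "comp_ratio i t \<le> comp_ratio m (gmut l1 l2 l3 m t)"
proof -
  obtain a b c where t: "t = (a,b,c)" by (cases t) auto
  have h: "a>0" "b>0" "c>0"
    using assms(4) unfolding Inv_def t by auto
  have q1: "a^2 \<le> a^2+l*a*b+b^2" "b^2 \<le> a^2+l*a*b+b^2" if "l \<ge> 0" for l
    using h that by auto
  have q2: "a^2 \<le> a^2+l*a*c+c^2" "c^2 \<le> a^2+l*a*c+c^2" if "l \<ge> 0" for l
    using h that by auto
  have q3: "b^2 \<le> b^2+l*b*c+c^2" "c^2 \<le> b^2+l*b*c+c^2" if "l \<ge> 0" for l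
    using h that by auto
  consider "i=1" "m=2" | "i=1" "m=3" | "i=2" "m=1" | "i=2" "m=3" | "i=3" "m=1" | "i=3" "m=2"
    using assms(5,6,7) by auto
  then show ?thesis
  proof cases
    case 1 then show ?thesis using core[OF h(1,2,3) q2(1)[OF assms(2)]] unfolding t by (simp add: mult_ac)
  next
    case 2 then show ?thesis using core[OF h(1,3,2) q1(1)[OF assms(3)]] unfolding t by (simp add: mult_ac)
  next
    case 3 then show ?thesis using core[OF h(2,1,3) q3(1)[OF assms(1)]] unfolding t by (simp add: mult_ac)
  next
    case 4 then show ?thesis using core[OF h(2,3,1) q1(2)[OF assms(3)]] unfolding t by (simp add: mult_ac)
  next
    case 5 then show ?thesis using core[OF h(3,1,2) q3(2)[OF assms(1)]] unfolding t by (simp add: mult_ac)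
  next
    case 6 then show ?thesis using core[OF h(3,2,1) q2(2)[OF assms(2)]] unfolding t by (simp add: mult_ac)
  qed
qed

theorem corollary6p9:
  fixes l1 l2 l3 :: nat and w :: "nat \<Rightarrow> nat"
  assumes "reduced_seq w"
  shows "\<exists>L::real. (\<lambda>j. ln (ratio_num (real l1) (real l2) (real l3) w (Suc j))) \<longlonglongrightarrow> L"
proof -
  define r where "r j = ratio_num (real l1) (real l2) (real l3) w (Suc j)" for j
  have nn: "real l1 \<ge> 0" "real l2 \<ge> 0" "real l3 \<ge> 0" by auto
  have I: "Inv l1 l2 l3 (Tseq l1 l2 l3 w j)" for j using inv_all[OF nn assms] .
  have B: "0 < r j \<and> r j \<le> 3+l1+l2+l3" for j
    unfolding r_def ratio_num_def using ratio_bound[OF nn I[of "Suc j"], of "w (Suc j)"] by (simp del: Tseq.simps)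
  have M: "r j \<le> r (Suc j)" for j
  proof -
    have "w (Suc j) \<in> {1,2,3}" "w (Suc (Suc j)) \<in> {1,2,3}" "w (Suc j) \<noteq> w (Suc (Suc j))"
      using assms unfolding reduced_seq_def by auto
    from ratio_mono[OF nn I[of "Suc j"] this] show ?thesis unfolding r_def ratio_num_def by simp
  qed
  have inc: "incseq (\<lambda>j. ln (r j))"
    by (rule incseq_SucI) (use B M in auto)
  have bdd: "bdd_above (range (\<lambda>j. ln (r j)))"
    by (rule bdd_aboveI[where M="ln (3+l1+l2+l3)"]) (use B in auto)
  show ?thesis unfolding r_def[symmetric] using LIMSEQ_incseq_SUP[OF bdd inc] by blast
qed

end
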